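(* Let $\Gamma$ be a marginal vector with strictly positive entries and fix an edge $ij\in\mathcal E$. The Bregman projections (with respect to $\Phi$) of $\Gamma$ onto the four affine sets below are given as follows, where in each case all components of $\Gamma$ not mentioned are unchanged. (a) If $\Gamma'=\mathcal P_{\mathcal X_{ij\to i}}(\Gamma)$, then for all $x_i,x_j\in\chi$: $\Gamma'_{ij}(x_i,x_j)=\Gamma_{ij}(x_i,x_j)\sqrt{\Gamma_i(x_i)/\sum_x\Gamma_{ij}(x_i,x)}$ and $\Gamma'_i(x_i)=\Gamma_i(x_i)\sqrt{\sum_x\Gamma_{ij}(x_i,x)/\Gamma_i(x_i)}$. (b) If $\Gamma'=\mathcal P_{\mathcal X_{ij,i}}(\Gamma)$, then $\Gamma'_i=\Gamma_i/\sum_x\Gamma_i(x)$ and $\Gamma'_{ij}=\Gamma_{ij}/\sum_{x_i,x_j}\Gamma_{ij}(x_i,x_j)$. (c) If $\Gamma'=\mathcal P_{\mathcal X_{ij\to j}}(\Gamma)$, then for all $x_i,x_j\in\chi$: $\Gamma'_{ij}(x_i,x_j)=\Gamma_{ij}(x_i,x_j)\sqrt{\Gamma_j(x_j)/\sum_x\Gamma_{ij}(x,x_j)}$ and $\Gamma'_j(x_j)=\Gamma_j(x_j)\sqrt{\sum_x\Gamma_{ij}(x,x_j)/\Gamma_j(x_j)}$. (d) If $\Gamma'=\mathcal P_{\mathcal X_{ij,j}}(\Gamma)$, then $\Gamma'_j=\Gamma_j/\sum_x\Gamma_j(x)$ and $\Gamma'_{ij}=\Gamma_{ij}/\sum_{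x_i,x_j}\Gamma_{ij}(x_i,x_j)$.
   Context: Let $G=(\mathcal V,\mathcal E)$ be a graph with $\mathcal V=\{1,\dots,n\}$, each edge written as an ordered pair $ij$, and $\chi=\{0,\dots,d-1\}$. A marginal vector $\Gamma$ consists of vectors $\Gamma_i\in\mathbb R^d$ ($i\in\mathcal V$, indexed $\Gamma_i(x)$) and matrices $\Gamma_{ij}\in\mathbb R^{d\times d}$ ($ij\in\mathcal E$, indexed $\Gamma_{ij}(x_i,x_j)$). Let $\Phi(\Gamma)=\sum\Gamma(\log\Gamma-1)$ summed over all entries, with Bregman divergence $\mathcal D_\Phi(P,Q)=\Phi(P)-\Phi(Q)-\langle\nabla\Phi(Q),P-Q\rangle$, and for a set $\mathcal X$ the Bregman projection $\mathcal P_{\mathcal X}(Q)=\arg\min_{P\in\mathcal X}\mathcal D_\Phi(P,Q)$. With $\mathbb 1$ the all-ones vector, define $\mathcal X_{ij\to i}=\{\Gamma:\Gamma_{ij}\mathbb 1=\Gamma_i\}$, $\mathcal X_{ij,i}=\{\Gamma:\Gamma_i^\top\mathbb 1=1,\ \mathbb 1^\top\Gamma_{ij}\mathbb 1=1\}$, $\mathcal X_{ij\to j}=\{\Gamma:\Gamma_{ij}^\top\mathbb 1=\Gamma_j\}$, $\mathcal X_{ij,j}=\{\Gamma:\Gamma_j^\top\mathbb 1=1,\ \mathbb 1^\top\Gamma_{ij}\mathbb 1=1\}$. *)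

theory Defs
  imports Complex_Main
begin

text \<open>A marginal vector: node vectors Gamma_i(x) (first component, indexed by node i and
  state x) and edge matrices Gamma_ij(x_i,x_j) (second component, indexed by the edge (i,j)
  and the states x_i, x_j).  Vertices are 1..n, states are 0..d-1.\<close>
type_synonym mvec = "(nat \<Rightarrow> nat \<Rightarrow> real) \<times> (nat \<times> nat \<Rightarrow> nat \<Rightarrow> nat \<Rightarrow> real)"

definition MV :: "nat \<Rightarrow> nat \<Rightarrow> (nat \<times> nat) set \<Rightarrow> mvec set" where
  "MV n d E = {G. (\<forall>i x. (i \<notin> {1..n} \<or> d \<le> x) \<longrightarrow> fst G i x = 0) \<and>
                  (\<forall>e x y. (e \<notin> E \<or> d \<le> x \<or> d \<le> y) \<longrightarrow> snd G e x y = 0)}"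

definition mv_pos :: "nat \<Rightarrow> nat \<Rightarrow> (nat \<times> nat) set \<Rightarrow> mvec \<Rightarrow> bool" where
  "mv_pos n d E G \<longleftrightarrow> (\<forall>i\<in>{1..n}. \<forall>x<d. 0 < fst G i x) \<and>
                        (\<forall>e\<in>E. \<forall>x<d. \<forall>y<d. 0 < snd G e x y)"

definition mv_nonneg :: "nat \<Rightarrow> nat \<Rightarrow> (nat \<times> nat) set \<Rightarrow> mvec \<Rightarrow> bool" where
  "mv_nonneg n d E G \<longleftrightarrow> (\<forall>i\<in>{1..n}. \<forall>x<d. 0 \<le> fst G i x) \<and>
                           (\<forall>e\<in>E. \<forall>x<d. \<forall>y<d. 0 \<le> snd G e x y)"

definition entry_sum :: "nat \<Rightarrow> nat \<Rightarrow> (nat \<times> nat) set \<Rightarrow> (real \<Rightarrow> real \<Rightarrow> real) \<Rightarrow> mvec \<Rightarrow> mvec \<Rightarrow> real" where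
  "entry_sum n d E f G H =
     (\<Sum>i\<in>{1..n}. \<Sum>x<d. f (fst G i x) (fst H i x)) +
     (\<Sum>e\<in>E. \<Sum>x<d. \<Sum>y<d. f (snd G e x y) (snd H e x y))"

text \<open>Phi(Gamma) = sum of Gamma (log Gamma - 1) over all entries (with ln 0 = 0, i.e. 0 log 0 = 0).\<close>
definition Phi :: "nat \<Rightarrow> nat \<Rightarrow> (nat \<times> nat) set \<Rightarrow> mvec \<Rightarrow> real" where
  "Phi n d E G = entry_sum n d E (\<lambda>a b. a * (ln a - 1)) G G"

definition grad_Phi :: "mvec \<Rightarrow> mvec" where
  "grad_Phi G = ((\<lambda>i x. ln (fst G i x)), (\<lambda>e x y. ln (snd G e x y)))"

definition mv_diff :: "mvec \<Rightarrow> mvec \<Rightarrow> mvec" where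
  "mv_diff P Q = ((\<lambda>i x. fst P i x - fst Q i x), (\<lambda>e x y. snd P e x y - snd Q e x y))"

definition mv_inner :: "nat \<Rightarrow> nat \<Rightarrow> (nat \<times> nat) set \<Rightarrow> mvec \<Rightarrow> mvec \<Rightarrow> real" where
  "mv_inner n d E G H = entry_sum n d E (\<lambda>a b. a * b) G H"

definition bregman_div :: "nat \<Rightarrow> nat \<Rightarrow> (nat \<times> nat) set \<Rightarrow> mvec \<Rightarrow> mvec \<Rightarrow> real" where
  "bregman_div n d E P Q = Phi n d E P - Phi n d E Q - mv_inner n d E (grad_Phi Q) (mv_diff P Q)"

definition bregman_proj :: "nat \<Rightarrow> nat \<Rightarrow> (nat \<times> nat) set \<Rightarrow> mvec set \<Rightarrow> mvec \<Rightarrow> mvec" where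
  "bregman_proj n d E X Q =
     (THE P. P \<in> X \<inter> MV n d E \<and> mv_nonneg n d E P \<and>
        (\<forall>R \<in> X \<inter> MV n d E. mv_nonneg n d E R \<longrightarrow> bregman_div n d E P Q \<le> bregman_div n d E R Q))"

definition X_to_i :: "nat \<Rightarrow> nat \<Rightarrow> nat \<Rightarrow> mvec set" where
  "X_to_i d i j = {G. \<forall>x<d. (\<Sum>y<d. snd G (i,j) x y) = fst G i x}"

definition X_norm_i :: "nat \<Rightarrow> nat \<Rightarrow> nat \<Rightarrow> mvec set" where
  "X_norm_i d i j = {G. (\<Sum>x<d. fst G i x) = 1 \<and> (\<Sum>x<d. \<Sum>y<d. snd G (i,j) x y) = 1}"

definition X_to_j :: "nat \<Rightarrow> nat \<Rightarrow> nat \<Rightarrow> mvec set" where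
  "X_to_j d i j = {G. \<forall>y<d. (\<Sum>x<d. snd G (i,j) x y) = fst G j y}"

definition X_norm_j :: "nat \<Rightarrow> nat \<Rightarrow> nat \<Rightarrow> mvec set" where
  "X_norm_j d i j = {G. (\<Sum>x<d. fst G j x) = 1 \<and> (\<Sum>x<d. \<Sum>y<d. snd G (i,j) x y) = 1}"

end

theory Submission
  imports Defs
begin

definition kl :: "real \<Rightarrow> real \<Rightarrow> real" where
  "kl r q = r*(ln r - 1) - q*(ln q - 1) - ln q * (r - q)"

definition ortho :: "nat \<Rightarrow> nat \<Rightarrow> (nat \<times> nat) set \<Rightarrow> mvec \<Rightarrow> mvec \<Rightarrow> mvec \<Rightarrow> real" where
  "ortho n d E P Q R =
    (\<Sum>i\<in>{1..n}. \<Sum>x<d. (ln (fst P i x) - ln (fst Q i x)) * (fst R i x - fst P i x)) +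
    (\<Sum>e\<in>E. \<Sum>x<d. \<Sum>y<d. (ln (snd P e x y) - ln (snd Q e x y)) * (snd R e x y - snd P e x y))"

lemma bd_expand: "bregman_div n d E P Q =
   (\<Sum>i\<in>{1..n}. \<Sum>x<d. kl (fst P i x) (fst Q i x)) +
   (\<Sum>e\<in>E. \<Sum>x<d. \<Sum>y<d. kl (snd P e x y) (snd Q e x y))"
  unfolding bregman_div_def Phi_def mv_inner_def entry_sum_def grad_Phi_def mv_diff_def kl_def
  by (simp add: sum_subtractf sum.distrib algebra_simps)

lemma kl_three: "kl r g = kl r p + kl p g + (ln p - ln g) * (r - p)"
  unfolding kl_def by (simp add: algebra_simps)

lemma three: "bregman_div n d E R G = bregman_div n d E R P + bregman_div n d E P G + ortho n d E P G R"
proof -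
  have h1: "(\<Sum>i\<in>{1..n}. \<Sum>x<d. kl (fst R i x) (fst G i x)) =
    (\<Sum>i\<in>{1..n}. \<Sum>x<d. kl (fst R i x) (fst P i x) + kl (fst P i x) (fst G i x) +
        (ln (fst P i x) - ln (fst G i x)) * (fst R i x - fst P i x))"
    by (intro sum.cong refl) (rule kl_three)
  have h2: "(\<Sum>e\<in>E. \<Sum>x<d. \<Sum>y<d. kl (snd R e x y) (snd G e x y)) =
    (\<Sum>e\<in>E. \<Sum>x<d. \<Sum>y<d. kl (snd R e x y) (snd P e x y) + kl (snd P e x y) (snd G e x y) +
        (ln (snd P e x y) - ln (snd G e x y)) * (snd R e x y - snd P e x y))"
    by (intro sum.cong refl) (rule kl_three)
  show ?thesis unfolding bd_expand ortho_def h1 h2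
    by (simp only: sum.distrib)
qed

lemma kl_pos: assumes "0 \<le> r" "0 < p" "r \<noteq> p" shows "0 < kl r p"
proof (cases "r = 0")
  case True then show ?thesis using assms by (simp add: kl_def)
next
  case False
  then have r: "0 < r" using assms by simp
  have pr: "0 < p / r" using r assms by simp
  have "p / r \<noteq> 1" using assms r by simp
  then have "ln (p/r) < p/r - 1" using pr ln_le_minus_one[OF pr] ln_eq_minus_one[OF pr] by fastforce
  then have "r * ln (p/r) < r * (p/r - 1)" using r by simp
  then have "r * (ln p - ln r) < p - r" using r assms by (simp add: ln_divide_pos algebra_simps)
  then show ?thesis unfolding kl_def by (simp add: algebra_simps)
qed

lemma kl_nonneg: assumes "0 \<le> r" "0 < p" shows "0 \<le> kl r p"
  using kl_pos[OF assms] by (cases "r = p") (auto simp: kl_def)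

lemma bd_nonneg: assumes "mv_nonneg n d E R" "mv_pos n d E P"
  shows "0 \<le> bregman_div n d E R P"
  unfolding bd_expand
  using assms unfolding mv_nonneg_def mv_pos_def
  by (intro add_nonneg_nonneg sum_nonneg kl_nonneg) auto

lemma bd_zero: assumes fin: "finite E" and R: "R \<in> MV n d E" "mv_nonneg n d E R"
  and P: "P \<in> MV n d E" "mv_pos n d E P" and le: "bregman_div n d E R P \<le> 0"
  shows "R = P"
proof -
  have nn1: "\<And>i x. i \<in> {1..n} \<Longrightarrow> x < d \<Longrightarrow> 0 \<le> kl (fst R i x) (fst P i x)"
    using R P unfolding mv_nonneg_def mv_pos_def by (auto intro: kl_nonneg)
  have nn2: "\<And>e x y. e \<in> E \<Longrightarrow> x < d \<Longrightarrow> y < d \<Longrightarrow> 0 \<le> kl (snd R e x y) (snd P e x y)"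
    using R P unfolding mv_nonneg_def mv_pos_def by (auto intro: kl_nonneg)
  let ?A = "(\<Sum>i\<in>{1..n}. \<Sum>x<d. kl (fst R i x) (fst P i x))"
  let ?B = "(\<Sum>e\<in>E. \<Sum>x<d. \<Sum>y<d. kl (snd R e x y) (snd P e x y))"
  have A: "0 \<le> ?A" using nn1 by (intro sum_nonneg) auto
  have B: "0 \<le> ?B" using nn2 by (intro sum_nonneg) auto
  have "?A + ?B \<le> 0" using le unfolding bd_expand .
  then have A0: "?A = 0" and B0: "?B = 0" using A B by linarith+
  have k1: "\<And>i x. i \<in> {1..n} \<Longrightarrow> x < d \<Longrightarrow> kl (fst R i x) (fst P i x) = 0"
  proof -
    fix i x assume i: "i \<in> {1..n}" and x: "x < d"
    have "(\<Sum>x<d. kl (fst R i x) (fst P i x)) = 0"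
      using A0 nn1 i by (subst (asm) sum_nonneg_eq_0_iff) (auto intro: sum_nonneg)
    then show "kl (fst R i x) (fst P i x) = 0"
      using nn1 i x by (subst (asm) sum_nonneg_eq_0_iff) auto
  qed
  have k2: "\<And>e x y. e \<in> E \<Longrightarrow> x < d \<Longrightarrow> y < d \<Longrightarrow> kl (snd R e x y) (snd P e x y) = 0"
  proof -
    fix e x y assume e: "e \<in> E" and x: "x < d" and y: "y < d"
    have "(\<Sum>x<d. \<Sum>y<d. kl (snd R e x y) (snd P e x y)) = 0"
      using B0 e fin by (subst (asm) sum_nonneg_eq_0_iff) (auto intro!: sum_nonneg nn2)
    then have "(\<Sum>y<d. kl (snd R e x y) (snd P e x y)) = 0"
      using e x by (subst (asm) sum_nonneg_eq_0_iff) (auto intro!: sum_nonneg nn2)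
    then show "kl (snd R e x y) (snd P e x y) = 0"
      using e x y by (subst (asm) sum_nonneg_eq_0_iff) (auto intro!: nn2)
  qed
  have f: "fst R = fst P"
  proof (intro ext)
    fix i x
    show "fst R i x = fst P i x"
    proof (cases "i \<in> {1..n} \<and> x < d")
      case True
      then show ?thesis using k1[of i x] kl_pos[of "fst R i x" "fst P i x"] R P
        unfolding mv_nonneg_def mv_pos_def by force
    next
      case False
      then show ?thesis using R P unfolding MV_def by auto
    qed
  qed
  have s: "snd R = snd P"
  proof (intro ext)
    fix e x y
    show "snd R e x y = snd P e x y"
    proof (cases "e \<in> E \<and> x < d \<and> y < d")
      case True
      then show ?thesis using k2[of e x y] kl_pos[of "snd R e x y" "snd P e x y"] R P
        unfolding mv_nonneg_def mv_pos_def by force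
    next
      case False
      have F: "e \<notin> E \<or> d \<le> x \<or> d \<le> y" using False by auto
      have "snd R e x y = 0" using R(1) F unfolding MV_def by blast
      moreover have "snd P e x y = 0" using P(1) F unfolding MV_def by blast
      ultimately show ?thesis by simp
    qed
  qed
  show ?thesis using f s by (simp add: prod_eq_iff)
qed

lemma pos_nonneg: "mv_pos n d E P \<Longrightarrow> mv_nonneg n d E P"
  unfolding mv_pos_def mv_nonneg_def by (auto simp: less_imp_le)

lemma proj_char:
  assumes fin: "finite E" and P: "P \<in> X" "P \<in> MV n d E" "mv_pos n d E P"
    and orth: "\<And>R. R \<in> X \<Longrightarrow> R \<in> MV n d E \<Longrightarrow> mv_nonneg n d E R \<Longrightarrow> ortho n d E P G R = 0"
  shows "bregman_proj n d E X G = P"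
  unfolding bregman_proj_def
proof (rule the_equality)
  show "P \<in> X \<inter> MV n d E \<and> mv_nonneg n d E P \<and>
    (\<forall>R\<in>X \<inter> MV n d E. mv_nonneg n d E R \<longrightarrow> bregman_div n d E P G \<le> bregman_div n d E R G)"
  proof (intro conjI ballI impI)
    show "P \<in> X \<inter> MV n d E" using P by simp
    show "mv_nonneg n d E P" using P pos_nonneg by blast
    fix R assume R: "R \<in> X \<inter> MV n d E" "mv_nonneg n d E R"
    have "bregman_div n d E R G = bregman_div n d E R P + bregman_div n d E P G + ortho n d E P G R"
      by (rule three)
    moreover have "ortho n d E P G R = 0" using R orth by auto
    moreover have "0 \<le> bregman_div n d E R P" using R P bd_nonneg by blast
    ultimately show "bregman_div n d E P G \<le> bregman_div n d E R G" by linarith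
  qed
next
  fix Q assume Q: "Q \<in> X \<inter> MV n d E \<and> mv_nonneg n d E Q \<and>
    (\<forall>R\<in>X \<inter> MV n d E. mv_nonneg n d E R \<longrightarrow> bregman_div n d E Q G \<le> bregman_div n d E R G)"
  then have le: "bregman_div n d E Q G \<le> bregman_div n d E P G" using P pos_nonneg by blast
  have "bregman_div n d E Q G = bregman_div n d E Q P + bregman_div n d E P G + ortho n d E P G Q"
    by (rule three)
  moreover have "ortho n d E P G Q = 0" using Q orth by auto
  ultimately have "bregman_div n d E Q P \<le> 0" using le by linarith
  then show "Q = P" using bd_zero[OF fin _ _ P(2,3)] Q by blast
qed

lemma ortho_reduce:
  assumes fin: "finite E" and k: "k \<in> {1..n}" and e: "e \<in> E"
    and f: "\<And>i. i \<noteq> k \<Longrightarrow> fst P i = fst G i" and s: "\<And>e'. e' \<noteq> e \<Longrightarrow> snd P e' = snd G e'"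
  shows "ortho n d E P G R =
    (\<Sum>x<d. (ln (fst P k x) - ln (fst G k x)) * (fst R k x - fst P k x)) +
    (\<Sum>x<d. \<Sum>y<d. (ln (snd P e x y) - ln (snd G e x y)) * (snd R e x y - snd P e x y))"
proof -
  have a: "(\<Sum>i\<in>{1..n}. \<Sum>x<d. (ln (fst P i x) - ln (fst G i x)) * (fst R i x - fst P i x))
     = (\<Sum>x<d. (ln (fst P k x) - ln (fst G k x)) * (fst R k x - fst P k x))"
    using k f by (subst sum.remove[of "{1..n}" k]) (auto intro!: sum.neutral)
  have b: "(\<Sum>e\<in>E. \<Sum>x<d. \<Sum>y<d. (ln (snd P e x y) - ln (snd G e x y)) * (snd R e x y - snd P e x y))
     = (\<Sum>x<d. \<Sum>y<d. (ln (snd P e x y) - ln (snd G e x y)) * (snd R e x y - snd P e x y))"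
    using e fin s by (subst sum.remove[of E e]) (auto intro!: sum.neutral)
  show ?thesis unfolding ortho_def a b ..
qed


lemma sqrt_half: assumes "0 < a" "0 < b" shows "a * sqrt (b / a) = sqrt a * sqrt b"
proof -
  have "a * sqrt (b / a) = (a / sqrt a) * sqrt b"
    using assms by (simp add: real_sqrt_divide)
  also have "a / sqrt a = sqrt a" using assms by (simp add: real_div_sqrt)
  finally show ?thesis .
qed

lemma sqrt_swap: assumes "0 < a" "0 < b" shows "a * sqrt (b / a) = b * sqrt (a / b)"
  using sqrt_half[OF assms] sqrt_half[OF assms(2,1)] by simp

lemma ln_msqrt: assumes "0 < (a::real)" "0 < c" shows "ln (a * sqrt c) - ln a = ln c / 2"
  using assms by (simp add: ln_mult ln_sqrt)

lemma ln_divc: assumes "0 < (a::real)" "0 < c" shows "ln (a / c) - ln a = - ln c"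
  using assms by (simp add: ln_divide_pos)

lemma case_norm:
  assumes fin: "finite E" and Gmv: "G \<in> MV n d E" and Gp: "mv_pos n d E G"
    and k: "k \<in> {1..n}" and e: "e \<in> E" and d: "0 < d"
  shows "bregman_proj n d E {G. (\<Sum>x<d. fst G k x) = 1 \<and> (\<Sum>x<d. \<Sum>y<d. snd G e x y) = 1} G =
      ((fst G)(k := (\<lambda>x. fst G k x / (\<Sum>z<d. fst G k z))),
       (snd G)(e := (\<lambda>x y. snd G e x y / (\<Sum>a<d. \<Sum>b<d. snd G e a b))))"
proof -
  define s1 where "s1 = (\<Sum>z<d. fst G k z)"
  define s2 where "s2 = (\<Sum>a<d. \<Sum>b<d. snd G e a b)"
  have gk: "\<And>x. x < d \<Longrightarrow> 0 < fst G k x" using Gp k unfolding mv_pos_def by auto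
  have ge: "\<And>x y. x < d \<Longrightarrow> y < d \<Longrightarrow> 0 < snd G e x y" using Gp e unfolding mv_pos_def by auto
  have s1p: "0 < s1" unfolding s1_def using d gk by (intro sum_pos) auto
  have s2p: "0 < s2" unfolding s2_def using d ge by (intro sum_pos) auto
  define P where "P = ((fst G)(k := (\<lambda>x. fst G k x / s1)), (snd G)(e := (\<lambda>x y. snd G e x y / s2)))"
  let ?X = "{G. (\<Sum>x<d. fst G k x) = 1 \<and> (\<Sum>x<d. \<Sum>y<d. snd G e x y) = 1}"
  have PX: "P \<in> ?X"
  proof -
    have "(\<Sum>x<d. fst G k x / s1) = 1" using s1p by (simp add: s1_def sum_divide_distrib[symmetric])
    moreover have "(\<Sum>x<d. \<Sum>y<d. snd G e x y / s2) = 1"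
      using s2p by (simp add: s2_def sum_divide_distrib[symmetric])
    ultimately show ?thesis by (simp add: P_def)
  qed
  have PMV: "P \<in> MV n d E"
    using Gmv k e unfolding MV_def P_def by auto
  have Ppos: "mv_pos n d E P"
    using Gp s1p s2p unfolding mv_pos_def P_def by auto
  have "bregman_proj n d E ?X G = P"
  proof (rule proj_char[OF fin PX PMV Ppos])
    fix R :: mvec assume R: "R \<in> ?X"
    have red: "ortho n d E P G R =
      (\<Sum>x<d. (ln (fst P k x) - ln (fst G k x)) * (fst R k x - fst P k x)) +
      (\<Sum>x<d. \<Sum>y<d. (ln (snd P e x y) - ln (snd G e x y)) * (snd R e x y - snd P e x y))"
      by (rule ortho_reduce[OF fin k e]) (auto simp: P_def)
    have a: "(\<Sum>x<d. (ln (fst P k x) - ln (fst G k x)) * (fst R k x - fst P k x))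
       = - ln s1 * ((\<Sum>x<d. fst R k x) - (\<Sum>x<d. fst P k x))"
      unfolding sum_subtractf[symmetric] sum_distrib_left
      by (intro sum.cong refl) (simp add: P_def ln_divc gk s1p)
    have b: "(\<Sum>x<d. \<Sum>y<d. (ln (snd P e x y) - ln (snd G e x y)) * (snd R e x y - snd P e x y))
       = - ln s2 * ((\<Sum>x<d. \<Sum>y<d. snd R e x y) - (\<Sum>x<d. \<Sum>y<d. snd P e x y))"
      unfolding sum_subtractf[symmetric] sum_distrib_left
      by (intro sum.cong refl) (simp add: P_def ln_divc ge s2p)
    show "ortho n d E P G R = 0" unfolding red a b using R PX by simp
  qed
  then show ?thesis by (simp add: P_def s1_def s2_def)
qed

lemma case_row:
  assumes fin: "finite E" and Gmv: "G \<in> MV n d E" and Gp: "mv_pos n d E G"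
    and i: "i \<in> {1..n}" and e: "(i,j) \<in> E" and d: "0 < d"
  shows "bregman_proj n d E (X_to_i d i j) G =
      ((fst G)(i := (\<lambda>x. fst G i x * sqrt ((\<Sum>y<d. snd G (i,j) x y) / fst G i x))),
       (snd G)((i,j) := (\<lambda>x y. snd G (i,j) x y * sqrt (fst G i x / (\<Sum>z<d. snd G (i,j) x z)))))"
proof -
  define S where "S x = (\<Sum>y<d. snd G (i,j) x y)" for x
  have gk: "\<And>x. x < d \<Longrightarrow> 0 < fst G i x" using Gp i unfolding mv_pos_def by auto
  have ge: "\<And>x y. x < d \<Longrightarrow> y < d \<Longrightarrow> 0 < snd G (i,j) x y" using Gp e unfolding mv_pos_def by auto
  have Sp: "\<And>x. x < d \<Longrightarrow> 0 < S x" unfolding S_def using d ge by (intro sum_pos) auto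
  define P where "P = ((fst G)(i := (\<lambda>x. fst G i x * sqrt (S x / fst G i x))),
       (snd G)((i,j) := (\<lambda>x y. snd G (i,j) x y * sqrt (fst G i x / S x))))"
  have PX: "P \<in> X_to_i d i j"
  proof -
    have "(\<Sum>y<d. snd G (i,j) x y * sqrt (fst G i x / S x)) = fst G i x * sqrt (S x / fst G i x)"
      if x: "x < d" for x
    proof -
      have "(\<Sum>y<d. snd G (i,j) x y * sqrt (fst G i x / S x)) = S x * sqrt (fst G i x / S x)"
        unfolding S_def by (simp add: sum_distrib_right)
      also have "\<dots> = fst G i x * sqrt (S x / fst G i x)" using sqrt_swap Sp gk x by blast
      finally show ?thesis .
    qed
    then show ?thesis by (simp add: P_def X_to_i_def)
  qed
  have PMV: "P \<in> MV n d E"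
    using Gmv i e unfolding MV_def P_def by auto
  have Ppos: "mv_pos n d E P"
    using Gp gk Sp unfolding mv_pos_def P_def by auto
  have "bregman_proj n d E (X_to_i d i j) G = P"
  proof (rule proj_char[OF fin PX PMV Ppos])
    fix R :: mvec assume R: "R \<in> X_to_i d i j"
    define L where "L x = ln (S x / fst G i x) / 2" for x
    have red: "ortho n d E P G R =
      (\<Sum>x<d. (ln (fst P i x) - ln (fst G i x)) * (fst R i x - fst P i x)) +
      (\<Sum>x<d. \<Sum>y<d. (ln (snd P (i,j) x y) - ln (snd G (i,j) x y)) * (snd R (i,j) x y - snd P (i,j) x y))"
      by (rule ortho_reduce[OF fin i e]) (auto simp: P_def)
    have a: "(\<Sum>x<d. (ln (fst P i x) - ln (fst G i x)) * (fst R i x - fst P i x))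
       = (\<Sum>x<d. L x * (fst R i x - fst P i x))"
      by (intro sum.cong refl) (simp add: P_def L_def ln_msqrt gk Sp)
    have b: "(\<Sum>x<d. \<Sum>y<d. (ln (snd P (i,j) x y) - ln (snd G (i,j) x y)) * (snd R (i,j) x y - snd P (i,j) x y))
       = (\<Sum>x<d. - (L x * (fst R i x - fst P i x)))"
    proof (intro sum.cong refl)
      fix x assume "x \<in> {..<d}"
      then have x: "x < d" by simp
      have "(\<Sum>y<d. (ln (snd P (i,j) x y) - ln (snd G (i,j) x y)) * (snd R (i,j) x y - snd P (i,j) x y))
         = (\<Sum>y<d. - L x * (snd R (i,j) x y - snd P (i,j) x y))"
      proof (intro sum.cong refl)
        fix y assume "y \<in> {..<d}"
        then have y: "y < d" by simp
        have "ln (snd P (i,j) x y) - ln (snd G (i,j) x y) = ln (fst G i x / S x) / 2"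
          using ln_msqrt[of "snd G (i,j) x y" "fst G i x / S x"] ge[OF x y] gk[OF x] Sp[OF x]
          by (simp add: P_def)
        also have "\<dots> = - L x" using gk[OF x] Sp[OF x] by (simp add: L_def ln_divide_pos field_simps)
        finally show "(ln (snd P (i,j) x y) - ln (snd G (i,j) x y)) * (snd R (i,j) x y - snd P (i,j) x y)
          = - L x * (snd R (i,j) x y - snd P (i,j) x y)" by simp
      qed
      also have "\<dots> = - L x * ((\<Sum>y<d. snd R (i,j) x y) - (\<Sum>y<d. snd P (i,j) x y))"
        unfolding sum_subtractf[symmetric] sum_distrib_left ..
      also have "\<dots> = - (L x * (fst R i x - fst P i x))"
        using R PX x unfolding X_to_i_def by simp
      finally show "(\<Sum>y<d. (ln (snd P (i,j) x y) - ln (snd G (i,j) x y)) * (snd R (i,j) x y - snd P (i,j) x y))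
         = - (L x * (fst R i x - fst P i x))" .
    qed
    show "ortho n d E P G R = 0" unfolding red a b by (simp add: sum_negf)
  qed
  then show ?thesis by (simp add: P_def S_def)
qed

lemma case_col:
  assumes fin: "finite E" and Gmv: "G \<in> MV n d E" and Gp: "mv_pos n d E G"
    and jn: "j \<in> {1..n}" and e: "(i,j) \<in> E" and d: "0 < d"
  shows "bregman_proj n d E (X_to_j d i j) G =
      ((fst G)(j := (\<lambda>y. fst G j y * sqrt ((\<Sum>x<d. snd G (i,j) x y) / fst G j y))),
       (snd G)((i,j) := (\<lambda>x y. snd G (i,j) x y * sqrt (fst G j y / (\<Sum>z<d. snd G (i,j) z y)))))"
proof -
  define S where "S y = (\<Sum>x<d. snd G (i,j) x y)" for y
  have gk: "\<And>x. x < d \<Longrightarrow> 0 < fst G j x" using Gp jn unfolding mv_pos_def by auto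
  have ge: "\<And>x y. x < d \<Longrightarrow> y < d \<Longrightarrow> 0 < snd G (i,j) x y" using Gp e unfolding mv_pos_def by auto
  have Sp: "\<And>y. y < d \<Longrightarrow> 0 < S y" unfolding S_def using d ge by (intro sum_pos) auto
  define P where "P = ((fst G)(j := (\<lambda>y. fst G j y * sqrt (S y / fst G j y))),
       (snd G)((i,j) := (\<lambda>x y. snd G (i,j) x y * sqrt (fst G j y / S y))))"
  have PX: "P \<in> X_to_j d i j"
  proof -
    have "(\<Sum>x<d. snd G (i,j) x y * sqrt (fst G j y / S y)) = fst G j y * sqrt (S y / fst G j y)"
      if y: "y < d" for y
    proof -
      have "(\<Sum>x<d. snd G (i,j) x y * sqrt (fst G j y / S y)) = S y * sqrt (fst G j y / S y)"
        unfolding S_def by (simp add: sum_distrib_right)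
      also have "\<dots> = fst G j y * sqrt (S y / fst G j y)" using sqrt_swap Sp gk y by blast
      finally show ?thesis .
    qed
    then show ?thesis by (simp add: P_def X_to_j_def)
  qed
  have PMV: "P \<in> MV n d E"
    using Gmv jn e unfolding MV_def P_def by auto
  have Ppos: "mv_pos n d E P"
    using Gp gk Sp unfolding mv_pos_def P_def by auto
  have "bregman_proj n d E (X_to_j d i j) G = P"
  proof (rule proj_char[OF fin PX PMV Ppos])
    fix R :: mvec assume R: "R \<in> X_to_j d i j"
    define L where "L y = ln (S y / fst G j y) / 2" for y
    have red: "ortho n d E P G R =
      (\<Sum>y<d. (ln (fst P j y) - ln (fst G j y)) * (fst R j y - fst P j y)) +
      (\<Sum>x<d. \<Sum>y<d. (ln (snd P (i,j) x y) - ln (snd G (i,j) x y)) * (snd R (i,j) x y - snd P (i,j) x y))"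
      by (rule ortho_reduce[OF fin jn e]) (auto simp: P_def)
    have a: "(\<Sum>y<d. (ln (fst P j y) - ln (fst G j y)) * (fst R j y - fst P j y))
       = (\<Sum>y<d. L y * (fst R j y - fst P j y))"
      by (intro sum.cong refl) (simp add: P_def L_def ln_msqrt gk Sp)
    have b: "(\<Sum>x<d. \<Sum>y<d. (ln (snd P (i,j) x y) - ln (snd G (i,j) x y)) * (snd R (i,j) x y - snd P (i,j) x y))
       = (\<Sum>y<d. - (L y * (fst R j y - fst P j y)))"
      apply (subst sum.swap)
    proof (intro sum.cong refl)
      fix y assume "y \<in> {..<d}"
      then have y: "y < d" by simp
      have "(\<Sum>x<d. (ln (snd P (i,j) x y) - ln (snd G (i,j) x y)) * (snd R (i,j) x y - snd P (i,j) x y))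
         = (\<Sum>x<d. - L y * (snd R (i,j) x y - snd P (i,j) x y))"
      proof (intro sum.cong refl)
        fix x assume "x \<in> {..<d}"
        then have x: "x < d" by simp
        have "ln (snd P (i,j) x y) - ln (snd G (i,j) x y) = ln (fst G j y / S y) / 2"
          using ln_msqrt[of "snd G (i,j) x y" "fst G j y / S y"] ge[OF x y] gk[OF y] Sp[OF y]
          by (simp add: P_def)
        also have "\<dots> = - L y" using gk[OF y] Sp[OF y] by (simp add: L_def ln_divide_pos field_simps)
        finally show "(ln (snd P (i,j) x y) - ln (snd G (i,j) x y)) * (snd R (i,j) x y - snd P (i,j) x y)
          = - L y * (snd R (i,j) x y - snd P (i,j) x y)" by simp
      qed
      also have "\<dots> = - L y * ((\<Sum>x<d. snd R (i,j) x y) - (\<Sum>x<d. snd P (i,j) x y))"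
        unfolding sum_subtractf[symmetric] sum_distrib_left ..
      also have "\<dots> = - (L y * (fst R j y - fst P j y))"
        using R PX y unfolding X_to_j_def by simp
      finally show "(\<Sum>x<d. (ln (snd P (i,j) x y) - ln (snd G (i,j) x y)) * (snd R (i,j) x y - snd P (i,j) x y))
         = - (L y * (fst R j y - fst P j y))" .
    qed
    show "ortho n d E P G R = 0" unfolding red a b by (simp add: sum_negf)
  qed
  then show ?thesis by (simp add: P_def S_def)
qed

theorem proposition1:
  fixes n d :: nat and E :: "(nat \<times> nat) set" and G :: mvec and i j :: nat
  assumes graph: "E \<subseteq> {1..n} \<times> {1..n}" and noloops: "\<forall>v. (v, v) \<notin> E"
    and d_pos: "0 < d"
    and G_mv: "G \<in> MV n d E" and G_pos: "mv_pos n d E G"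
    and edge: "(i, j) \<in> E"
  shows
   "(bregman_proj n d E (X_to_i d i j) G =
      ((fst G)(i := (\<lambda>x. fst G i x * sqrt ((\<Sum>y<d. snd G (i,j) x y) / fst G i x))),
       (snd G)((i,j) := (\<lambda>x y. snd G (i,j) x y * sqrt (fst G i x / (\<Sum>z<d. snd G (i,j) x z)))))) \<and>
   (bregman_proj n d E (X_norm_i d i j) G =
      ((fst G)(i := (\<lambda>x. fst G i x / (\<Sum>z<d. fst G i z))),
       (snd G)((i,j) := (\<lambda>x y. snd G (i,j) x y / (\<Sum>a<d. \<Sum>b<d. snd G (i,j) a b))))) \<and>
   (bregman_proj n d E (X_to_j d i j) G =
      ((fst G)(j := (\<lambda>y. fst G j y * sqrt ((\<Sum>x<d. snd G (i,j) x y) / fst G j y))),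
       (snd G)((i,j) := (\<lambda>x y. snd G (i,j) x y * sqrt (fst G j y / (\<Sum>z<d. snd G (i,j) z y)))))) \<and>
   (bregman_proj n d E (X_norm_j d i j) G =
      ((fst G)(j := (\<lambda>y. fst G j y / (\<Sum>z<d. fst G j z))),
       (snd G)((i,j) := (\<lambda>x y. snd G (i,j) x y / (\<Sum>a<d. \<Sum>b<d. snd G (i,j) a b)))))"
  proof -
  have fin: "finite E"
    using graph by (rule finite_subset) simp
  have i: "i \<in> {1..n}" and j: "j \<in> {1..n}" using graph edge by auto
  have xi: "X_norm_i d i j = {G. (\<Sum>x<d. fst G i x) = 1 \<and> (\<Sum>x<d. \<Sum>y<d. snd G (i,j) x y) = 1}"
    unfolding X_norm_i_def ..
  have xj: "X_norm_j d i j = {G. (\<Sum>x<d. fst G j x) = 1 \<and> (\<Sum>x<d. \<Sum>y<d. snd G (i,j) x y) = 1}"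
    unfolding X_norm_j_def ..
  show ?thesis
    using case_row[OF fin G_mv G_pos i edge d_pos] case_col[OF fin G_mv G_pos j edge d_pos]
      case_norm[OF fin G_mv G_pos i edge d_pos] case_norm[OF fin G_mv G_pos j edge d_pos]
    unfolding xi xj by simp
qed

end
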